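(* Let $L$ be a $\phi$-subfield of $\mathbf{K}'$ containing $\mathbf{K}$ (i.e. a subfield with $\mathbf{K}\subset L\subset\mathbf{K}'$ and $\phi(L)=L$). Then there exists an integer $k\geq0$ such that $L=\mathbf{K}(\log(z)^k)$.
   Context: $p\geq2$ integer. $\mathbf{K}=\bigcup_{j\geq1}\mathbb{C}(z^{1/j})$ with automorphism $\phi(f(z))=f(z^p)$; $\mathbf{K}'=\mathbf{K}(\log z)$ ($\log z$ transcendental over $\mathbf{K}$) with automorphism $\phi(f(z,\log z))=f(z^p,p\log z)$. *)

theory Defs
  imports "HOL-Analysis.Analysis"
begin

text \<open>Elements of K and K' are modelled concretely as germs at +infinity of
  functions of a positive real variable z (so z^(1/j) and log z are the usual
  real-analytic branches).  A germ is represented by any function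
  real => complex; two functions represent the same element iff they agree
  eventually at top.  All sets of elements below are saturated under this
  equivalence.\<close>

definition germ_eq :: "(real \<Rightarrow> complex) \<Rightarrow> (real \<Rightarrow> complex) \<Rightarrow> bool" where
  "germ_eq f g \<longleftrightarrow> (\<forall>\<^sub>F x in at_top. f x = g x)"

definition Kj :: "nat \<Rightarrow> (real \<Rightarrow> complex) set" where
  "Kj j = {f. \<exists>P Q :: complex poly. germ_eq f
     (\<lambda>x. poly P (complex_of_real (x powr (1 / real j))) /
          poly Q (complex_of_real (x powr (1 / real j))))}"

definition KK :: "(real \<Rightarrow> complex) set" where
  "KK = (\<Union>j\<in>{1..}. Kj j)"

definition logfn :: "real \<Rightarrow> complex" where
  "logfn x = complex_of_real (ln x)"

definition adjoin :: "(real \<Rightarrow> complex) set \<Rightarrow> (real \<Rightarrow> complex) \<Rightarrow> (real \<Rightarrow> complex) set" where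
  "adjoin S t = {f. \<exists>(a :: nat \<Rightarrow> real \<Rightarrow> complex) b n. (\<forall>i. a i \<in> S \<and> b i \<in> S) \<and>
     germ_eq f (\<lambda>x. (\<Sum>i<n. a i x * t x ^ i) / (\<Sum>i<n. b i x * t x ^ i))}"

definition KK' :: "(real \<Rightarrow> complex) set" where
  "KK' = adjoin KK logfn"

text \<open>The automorphism phi: f(z) |-> f(z^p) (on K' this is f(z, log z) |-> f(z^p, p log z)).\<close>
definition phi :: "nat \<Rightarrow> (real \<Rightarrow> complex) \<Rightarrow> (real \<Rightarrow> complex)" where
  "phi p f = (\<lambda>x. f (x ^ p))"

definition germ_subfield :: "(real \<Rightarrow> complex) set \<Rightarrow> bool" where
  "germ_subfield L \<longleftrightarrow>
     (\<forall>f g. f \<in> L \<longrightarrow> germ_eq f g \<longrightarrow> g \<in> L) \<and>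
     (\<lambda>_. 0) \<in> L \<and> (\<lambda>_. 1) \<in> L \<and>
     (\<forall>f\<in>L. \<forall>g\<in>L. (\<lambda>x. f x + g x) \<in> L \<and> (\<lambda>x. f x * g x) \<in> L) \<and>
     (\<forall>f\<in>L. (\<lambda>x. - f x) \<in> L \<and> (\<lambda>x. inverse (f x)) \<in> L)"

end

theory Submission imports Defs "HOL-Real_Asymp.Real_Asymp" begin

definition Zg :: "(real \<Rightarrow> complex) \<Rightarrow> bool" where "Zg f \<longleftrightarrow> germ_eq f (\<lambda>_. 0)"
definition wfn :: "real \<Rightarrow> real \<Rightarrow> real \<Rightarrow> real" where "wfn r s x = x powr r * ln x powr s"
definition LTm :: "(real \<Rightarrow> complex) \<Rightarrow> complex \<Rightarrow> real \<Rightarrow> real \<Rightarrow> bool" where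
  "LTm f a r s \<longleftrightarrow> a \<noteq> 0 \<and> ((\<lambda>x. f x / complex_of_real (wfn r s x)) \<longlongrightarrow> a) at_top"

lemma germ_eq_refl: "germ_eq f f" by (simp add: germ_eq_def)
lemma germ_eq_sym: assumes "germ_eq f g" shows "germ_eq g f"
  using assms unfolding germ_eq_def by eventually_elim simp
lemma germ_eq_trans: assumes "germ_eq f g" "germ_eq g h" shows "germ_eq f h"
  using assms unfolding germ_eq_def by eventually_elim simp

lemma tendsto_ev_eq: "(f \<longlongrightarrow> c) F \<Longrightarrow> eventually (\<lambda>x. f x = g x) F \<Longrightarrow> (g \<longlongrightarrow> c) F"
  using tendsto_cong by blast

lemma wfn_pos: "x > 1 \<Longrightarrow> wfn r s x > 0" by (simp add: wfn_def)

lemma LTm_cong: assumes "germ_eq f g" "LTm f a r s" shows "LTm g a r s"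
proof -
  have ev: "eventually (\<lambda>x. f x / complex_of_real (wfn r s x) = g x / complex_of_real (wfn r s x)) at_top"
    using assms(1) unfolding germ_eq_def by eventually_elim simp
  have an: "a \<noteq> 0" and l: "((\<lambda>x. f x / complex_of_real (wfn r s x)) \<longlongrightarrow> a) at_top"
    using assms(2) unfolding LTm_def by blast+
  have "((\<lambda>x. g x / complex_of_real (wfn r s x)) \<longlongrightarrow> a) at_top"
    by (rule tendsto_ev_eq[OF l ev])
  then show ?thesis using an unfolding LTm_def by blast
qed

lemma LTm_ev_nz: assumes "LTm f a r s" shows "eventually (\<lambda>x. f x \<noteq> 0) at_top"
proof -
  have "a \<noteq> 0" "((\<lambda>x. f x / complex_of_real (wfn r s x)) \<longlongrightarrow> a) at_top"
    using assms unfolding LTm_def by auto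
  then have "eventually (\<lambda>x. f x / complex_of_real (wfn r s x) \<noteq> 0) at_top"
    using tendsto_imp_eventually_ne by blast
  then show ?thesis by eventually_elim auto
qed

lemma wfn_mult: "x > 1 \<Longrightarrow> wfn (r+r') (s+s') x = wfn r s x * wfn r' s' x"
  unfolding wfn_def powr_add by (simp only: mult_ac)
lemma wfn_div: "x > 1 \<Longrightarrow> wfn (r-r') (s-s') x = wfn r s x / wfn r' s' x"
  unfolding wfn_def powr_diff by simp

lemma LTm_mult: assumes "LTm f a r s" "LTm g b r' s'"
  shows "LTm (\<lambda>x. f x * g x) (a*b) (r+r') (s+s')"
proof -
  have "((\<lambda>x. (f x / complex_of_real (wfn r s x)) * (g x / complex_of_real (wfn r' s' x))) \<longlongrightarrow> a*b) at_top"
    using assms unfolding LTm_def by (intro tendsto_mult) auto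
  moreover have "eventually (\<lambda>x. (f x / complex_of_real (wfn r s x)) * (g x / complex_of_real (wfn r' s' x))
      = f x * g x / complex_of_real (wfn (r+r') (s+s') x)) at_top"
    using eventually_gt_at_top[of 1] by eventually_elim (simp add: wfn_mult)
  ultimately have "((\<lambda>x. f x * g x / complex_of_real (wfn (r+r') (s+s') x)) \<longlongrightarrow> a*b) at_top"
    by (rule tendsto_ev_eq)
  then show ?thesis using assms unfolding LTm_def by auto
qed

lemma LTm_div: assumes "LTm f a r s" "LTm g b r' s'"
  shows "LTm (\<lambda>x. f x / g x) (a/b) (r-r') (s-s')"
proof -
  have "((\<lambda>x. (f x / complex_of_real (wfn r s x)) / (g x / complex_of_real (wfn r' s' x))) \<longlongrightarrow> a/b) at_top"
    using assms unfolding LTm_def by (intro tendsto_divide) auto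
  moreover have "eventually (\<lambda>x. (f x / complex_of_real (wfn r s x)) / (g x / complex_of_real (wfn r' s' x))
      = (f x / g x) / complex_of_real (wfn (r-r') (s-s') x)) at_top"
    using eventually_gt_at_top[of 1] proof eventually_elim
    case (elim x)
    then have "wfn r' s' x > 0" "wfn r s x > 0" using wfn_pos by auto
    then show ?case using elim by (simp add: wfn_div field_simps)
  qed
  ultimately have "((\<lambda>x. (f x / g x) / complex_of_real (wfn (r-r') (s-s') x)) \<longlongrightarrow> a/b) at_top"
    by (rule tendsto_ev_eq)
  then show ?thesis using assms unfolding LTm_def by auto
qed

lemma wfn_pow: assumes "x > 1" "p > 0" shows "wfn r s (x^p) = real p powr s * wfn (real p * r) s x"
proof -
  have "wfn r s (x^p) = (x powr real p) powr r * (real p * ln x) powr s"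
    using assms by (simp add: wfn_def powr_realpow ln_realpow)
  also have "\<dots> = x powr (real p * r) * (real p powr s * ln x powr s)"
    using assms by (simp add: powr_powr powr_mult)
  finally show ?thesis by (simp add: wfn_def)
qed

lemma LTm_phi: assumes "LTm f a r s" "p > 0"
  shows "LTm (phi p f) (a * complex_of_real (real p powr s)) (real p * r) s"
proof -
  have lim: "filterlim (\<lambda>x::real. x ^ p) at_top at_top" using assms(2)
    by (intro filterlim_pow_at_top filterlim_ident)
  from assms(1) have l: "((\<lambda>x. f x / complex_of_real (wfn r s x)) \<longlongrightarrow> a) at_top"
    by (simp add: LTm_def)
  have "((\<lambda>x. f (x^p) / complex_of_real (wfn r s (x^p))) \<longlongrightarrow> a) at_top"
    by (rule filterlim_compose[OF l lim])
  hence "((\<lambda>x. f (x^p) / complex_of_real (wfn r s (x^p)) * complex_of_real (real p powr s))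
     \<longlongrightarrow> a * complex_of_real (real p powr s)) at_top"
    by (intro tendsto_mult tendsto_const)
  moreover have "eventually (\<lambda>x. f (x^p) / complex_of_real (wfn r s (x^p)) * complex_of_real (real p powr s)
      = phi p f x / complex_of_real (wfn (real p * r) s x)) at_top"
    using eventually_gt_at_top[of 1] proof eventually_elim
    case (elim x)
    have "real p powr s > 0" using assms(2) by simp
    then show ?case using elim assms(2) by (simp add: wfn_pow phi_def)
  qed
  ultimately have "((\<lambda>x. phi p f x / complex_of_real (wfn (real p * r) s x)) \<longlongrightarrow> a * complex_of_real (real p powr s)) at_top"
    by (rule tendsto_ev_eq)
  moreover have "a * complex_of_real (real p powr s) \<noteq> 0" using assms by (auto simp: LTm_def)
  ultimately show ?thesis unfolding LTm_def by blast
qed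

lemma wfn_to0: assumes "r < 0 \<or> (r = 0 \<and> s < 0)" shows "((\<lambda>x. wfn r s x) \<longlongrightarrow> 0) at_top"
  using assms
proof
  assume "r < 0" then show ?thesis unfolding wfn_def by real_asymp
next
  assume "r = 0 \<and> s < 0"
  then have "r = 0" "s < 0" by auto
  then show ?thesis unfolding wfn_def by real_asymp
qed

lemma LTm_small: assumes "LTm g b r' s'" "r' < r \<or> (r' = r \<and> s' < s)"
  shows "((\<lambda>x. g x / complex_of_real (wfn r s x)) \<longlongrightarrow> 0) at_top"
proof -
  have "((\<lambda>x. complex_of_real (wfn (r'-r) (s'-s) x)) \<longlongrightarrow> 0) at_top"
  proof -
    have "((\<lambda>x. wfn (r'-r) (s'-s) x) \<longlongrightarrow> 0) at_top" using assms(2) by (intro wfn_to0) auto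
    from tendsto_of_real[OF this, where 'a=complex] show ?thesis by simp
  qed
  then have "((\<lambda>x. (g x / complex_of_real (wfn r' s' x)) * complex_of_real (wfn (r'-r) (s'-s) x)) \<longlongrightarrow> b * 0) at_top"
    using assms(1) unfolding LTm_def by (intro tendsto_mult) simp_all
  moreover have "eventually (\<lambda>x. (g x / complex_of_real (wfn r' s' x)) * complex_of_real (wfn (r'-r) (s'-s) x)
     = g x / complex_of_real (wfn r s x)) at_top"
    using eventually_gt_at_top[of 1] proof eventually_elim
    case (elim x)
    then have "wfn r' s' x > 0" "wfn r s x > 0" using wfn_pos by auto
    then show ?case using elim by (simp add: wfn_div field_simps)
  qed
  ultimately have "((\<lambda>x. g x / complex_of_real (wfn r s x)) \<longlongrightarrow> b * 0) at_top"
    by (rule tendsto_ev_eq)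
  then show ?thesis by simp
qed

lemma LTm_add: assumes "LTm f a r s" "((\<lambda>x. g x / complex_of_real (wfn r s x)) \<longlongrightarrow> 0) at_top"
  shows "LTm (\<lambda>x. f x + g x) a r s"
proof -
  have l1: "((\<lambda>x. f x / complex_of_real (wfn r s x)) \<longlongrightarrow> a) at_top" and an: "a \<noteq> 0"
    using assms(1) unfolding LTm_def by auto
  have "((\<lambda>x. f x / complex_of_real (wfn r s x) + g x / complex_of_real (wfn r s x)) \<longlongrightarrow> a + 0) at_top"
    by (rule tendsto_add[OF l1 assms(2)])
  then have "((\<lambda>x. (f x + g x) / complex_of_real (wfn r s x)) \<longlongrightarrow> a) at_top"
    unfolding add_divide_distrib by simp
  then show ?thesis using an unfolding LTm_def by blast
qed

lemma Zg_small: assumes "Zg g" shows "((\<lambda>x. g x / complex_of_real (wfn r s x)) \<longlongrightarrow> 0) at_top"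
proof -
  have "eventually (\<lambda>x. 0 = g x / complex_of_real (wfn r s x)) at_top"
    using assms unfolding Zg_def germ_eq_def by eventually_elim simp
  then show ?thesis by (rule tendsto_ev_eq[OF tendsto_const])
qed

lemma LTm_not_smaller: assumes "LTm f a r s" "LTm f b r' s'" shows "\<not> (r' < r \<or> (r' = r \<and> s' < s))"
proof
  assume h: "r' < r \<or> (r' = r \<and> s' < s)"
  have l0: "((\<lambda>x. f x / complex_of_real (wfn r s x)) \<longlongrightarrow> 0) at_top" using LTm_small[OF assms(2) h] .
  have l1: "((\<lambda>x. f x / complex_of_real (wfn r s x)) \<longlongrightarrow> a) at_top" and an: "a \<noteq> 0"
    using assms(1) unfolding LTm_def by blast+
  have "a = 0" by (rule tendsto_unique[OF trivial_limit_at_top_linorder l1 l0])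
  with an show False by simp
qed

lemma LTm_unique: assumes "LTm f a r s" "LTm f b r' s'" shows "r = r' \<and> s = s' \<and> a = b"
proof -
  have e: "r = r'" "s = s'" using LTm_not_smaller[OF assms] LTm_not_smaller[OF assms(2,1)] by linarith+
  have l2: "((\<lambda>x. f x / complex_of_real (wfn r' s' x)) \<longlongrightarrow> b) at_top" using assms(2) unfolding LTm_def by blast
  have l1: "((\<lambda>x. f x / complex_of_real (wfn r' s' x)) \<longlongrightarrow> a) at_top" using assms(1) e unfolding LTm_def by blast
  have "a = b" by (rule tendsto_unique[OF trivial_limit_at_top_linorder l1 l2])
  with e show ?thesis by simp
qed


definition Good :: "(real \<Rightarrow> complex) \<Rightarrow> bool" where
  "Good f \<longleftrightarrow> Zg f \<or> (\<exists>a r s. LTm f a r s)"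

lemma one_over_lim: "((\<lambda>y::real. 1 / y) \<longlongrightarrow> 0) at_top" by real_asymp

lemma poly_lead_lim: fixes P :: "complex poly" assumes "P \<noteq> 0"
  shows "((\<lambda>y::real. poly P (complex_of_real y) / complex_of_real y ^ degree P) \<longlongrightarrow> lead_coeff P) at_top"
proof -
  let ?d = "degree P"
  have l0: "((\<lambda>y::real. (1/y) ^ k) \<longlongrightarrow> 0 ^ k) at_top" for k
    by (rule tendsto_power[OF one_over_lim])
  have lim: "((\<lambda>y::real. \<Sum>i\<le>?d. coeff P i * complex_of_real ((1/y) ^ (?d - i)))
      \<longlongrightarrow> (\<Sum>i\<le>?d. coeff P i * complex_of_real (0 ^ (?d - i)))) at_top"
    by (intro tendsto_sum tendsto_mult tendsto_const tendsto_of_real l0)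
  have "(\<Sum>i\<le>?d. coeff P i * complex_of_real (0 ^ (?d - i))) = (\<Sum>i\<le>?d. if i = ?d then coeff P i else 0)"
    by (rule sum.cong) auto
  also have "\<dots> = lead_coeff P" by simp
  finally have lim2: "((\<lambda>y::real. \<Sum>i\<le>?d. coeff P i * complex_of_real ((1/y) ^ (?d - i))) \<longlongrightarrow> lead_coeff P) at_top"
    using lim by simp
  have ev: "eventually (\<lambda>y::real. (\<Sum>i\<le>?d. coeff P i * complex_of_real ((1/y) ^ (?d - i)))
      = poly P (complex_of_real y) / complex_of_real y ^ degree P) at_top"
    using eventually_gt_at_top[of 0]
  proof eventually_elim
    case (elim y)
    have "(\<Sum>i\<le>?d. coeff P i * complex_of_real ((1/y) ^ (?d - i))) = (\<Sum>i\<le>?d. coeff P i * complex_of_real y ^ i / complex_of_real y ^ ?d)"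
    proof (rule sum.cong)
      fix i assume "i \<in> {..?d}"
      then have i: "i \<le> ?d" by simp
      have yy: "complex_of_real y ^ ?d = complex_of_real y ^ i * complex_of_real y ^ (?d - i)"
        using i by (simp add: power_add[symmetric])
      have "complex_of_real y \<noteq> 0" using elim by simp
      then show "coeff P i * complex_of_real ((1/y) ^ (?d - i)) = coeff P i * complex_of_real y ^ i / complex_of_real y ^ ?d"
        unfolding yy by (simp add: power_divide field_simps)
    qed simp
    also have "\<dots> = poly P (complex_of_real y) / complex_of_real y ^ ?d"
      by (simp add: poly_altdef sum_divide_distrib)
    finally show ?case .
  qed
  show ?thesis by (rule tendsto_ev_eq[OF lim2 ev])
qed

lemma poly_LTm: fixes P :: "complex poly" assumes "P \<noteq> 0" "j > 0"
  shows "LTm (\<lambda>x. poly P (complex_of_real (x powr (1 / real j)))) (lead_coeff P) (real (degree P) / real j) 0"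
proof -
  have e: "1 / real j > 0" using assms(2) by simp
  have y: "filterlim (\<lambda>x::real. x powr (1 / real j)) at_top at_top"
    using e by real_asymp
  have l: "((\<lambda>x. poly P (complex_of_real (x powr (1 / real j))) / complex_of_real (x powr (1 / real j)) ^ degree P)
     \<longlongrightarrow> lead_coeff P) at_top"
    by (rule filterlim_compose[OF poly_lead_lim[OF assms(1)] y])
  have ev: "eventually (\<lambda>x. poly P (complex_of_real (x powr (1 / real j))) / complex_of_real (x powr (1 / real j)) ^ degree P
     = poly P (complex_of_real (x powr (1 / real j))) / complex_of_real (wfn (real (degree P) / real j) 0 x)) at_top"
    using eventually_gt_at_top[of 1]
  proof eventually_elim
    case (elim x)
    have "wfn (real (degree P) / real j) 0 x = x powr (real (degree P) / real j)"
      using elim by (simp add: wfn_def)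
    also have "\<dots> = (x powr (1 / real j)) powr (real (degree P))"
      by (simp add: powr_powr)
    also have "\<dots> = (x powr (1 / real j)) ^ degree P"
      using elim by (simp add: powr_realpow)
    finally show ?case by simp
  qed
  show ?thesis unfolding LTm_def using tendsto_ev_eq[OF l ev] assms(1) by simp
qed

lemma KK_cases: assumes "a \<in> KK" shows "Zg a \<or> (\<exists>\<alpha> r. LTm a \<alpha> r 0)"
proof -
  from assms obtain j P Q where j: "j \<ge> 1" and g: "germ_eq a
     (\<lambda>x. poly P (complex_of_real (x powr (1 / real j))) /
          poly Q (complex_of_real (x powr (1 / real j))))"
    unfolding KK_def Kj_def by auto
  show ?thesis
  proof (cases "P = 0 \<or> Q = 0")
    case True
    have "germ_eq a (\<lambda>_. 0)" using g unfolding germ_eq_def by eventually_elim (use True in auto)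
    then show ?thesis unfolding Zg_def by simp
  next
    case False
    then have "LTm (\<lambda>x. poly P (complex_of_real (x powr (1 / real j))) /
          poly Q (complex_of_real (x powr (1 / real j)))) (lead_coeff P / lead_coeff Q)
          (real (degree P) / real j - real (degree Q) / real j) (0 - 0)"
      using j by (intro LTm_div poly_LTm) auto
    from LTm_cong[OF germ_eq_sym[OF g] this]
    have "LTm a (lead_coeff P / lead_coeff Q) (real (degree P) / real j - real (degree Q) / real j) (0 - 0)" .
    then have "LTm a (lead_coeff P / lead_coeff Q) (real (degree P) / real j - real (degree Q) / real j) 0"
      by simp
    then show ?thesis by blast
  qed
qed

lemma LTm_logpow: "LTm (\<lambda>x. logfn x ^ n) 1 0 (real n)"
proof -
  have ev: "eventually (\<lambda>x. 1 = logfn x ^ n / complex_of_real (wfn 0 (real n) x)) at_top"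
    using eventually_gt_at_top[of 1]
  proof eventually_elim
    case (elim x)
    then have "ln x > 0" by simp
    then have "wfn 0 (real n) x = ln x ^ n" using elim by (simp add: wfn_def powr_realpow)
    moreover have "ln x ^ n > 0" using \<open>ln x > 0\<close> by simp
    ultimately show ?case using \<open>ln x > 0\<close> by (simp add: logfn_def)
  qed
  show ?thesis unfolding LTm_def using tendsto_ev_eq[OF tendsto_const ev] by simp
qed

lemma Zg_add: assumes "Zg f" "Zg g" shows "Zg (\<lambda>x. f x + g x)"
  using assms unfolding Zg_def germ_eq_def by eventually_elim simp

lemma Zg_mult: assumes "Zg f" shows "Zg (\<lambda>x. f x * g x)"
  using assms unfolding Zg_def germ_eq_def by eventually_elim simp

lemma Zg_div: assumes "Zg f" shows "Zg (\<lambda>x. f x / g x)"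
  using assms unfolding Zg_def germ_eq_def by eventually_elim simp

lemma Zg_div2: assumes "Zg g" shows "Zg (\<lambda>x. f x / g x)"
  using assms unfolding Zg_def germ_eq_def by eventually_elim simp

lemma LTm_add_Zg: assumes "LTm f a r s" "Zg g" shows "LTm (\<lambda>x. f x + g x) a r s"
  by (rule LTm_add[OF assms(1) Zg_small[OF assms(2)]])

lemma Zg_cong: assumes "Zg f" "germ_eq f g" shows "Zg g"
  using assms unfolding Zg_def germ_eq_def by eventually_elim simp

lemma polysum_good: assumes "\<forall>i. a i \<in> KK"
  shows "Zg (\<lambda>x. \<Sum>i<n. a i x * logfn x ^ i) \<or>
    (\<exists>\<alpha> r s. s < n \<and> LTm (\<lambda>x. \<Sum>i<n. a i x * logfn x ^ i) \<alpha> r (real s))"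
proof (induction n)
  case 0
  then show ?case unfolding Zg_def germ_eq_def by simp
next
  case (Suc n)
  let ?S = "\<lambda>x. \<Sum>i<n. a i x * logfn x ^ i"
  let ?T = "\<lambda>x. a n x * logfn x ^ n"
  have eqS: "(\<lambda>x. \<Sum>i<Suc n. a i x * logfn x ^ i) = (\<lambda>x. ?S x + ?T x)" by simp
  have eqS': "(\<lambda>x. \<Sum>i<Suc n. a i x * logfn x ^ i) = (\<lambda>x. ?T x + ?S x)" by (simp add: add.commute)
  have T: "Zg ?T \<or> (\<exists>\<beta> r'. LTm ?T \<beta> r' (real n))"
  proof -
    have k: "Zg (a n) \<or> (\<exists>\<alpha> r. LTm (a n) \<alpha> r 0)" using assms by (intro KK_cases) simp
    from k show ?thesis
    proof
      assume "Zg (a n)"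
      have "Zg ?T" by (rule Zg_mult[OF \<open>Zg (a n)\<close>])
      then show ?thesis by (rule disjI1)
    next
      assume "\<exists>\<alpha> r. LTm (a n) \<alpha> r 0"
      then obtain \<alpha> r where "LTm (a n) \<alpha> r 0" by blast
      from LTm_mult[OF this LTm_logpow[of n]] have "LTm ?T (\<alpha> * 1) (r + 0) (0 + real n)" .
      then have "LTm ?T \<alpha> r (real n)" by simp
      then show ?thesis by (intro disjI2 exI)
    qed
  qed
  from Suc.IH show ?case
  proof
    assume zS: "Zg ?S"
    from T show ?thesis
    proof
      assume "Zg ?T"
      have "Zg (\<lambda>x. \<Sum>i<Suc n. a i x * logfn x ^ i)" unfolding eqS by (rule Zg_add[OF zS \<open>Zg ?T\<close>])
      then show ?thesis by (rule disjI1)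
    next
      assume "\<exists>\<beta> r'. LTm ?T \<beta> r' (real n)"
      then obtain \<beta> r' where "LTm ?T \<beta> r' (real n)" by blast
      from LTm_add_Zg[OF this zS] have "LTm (\<lambda>x. \<Sum>i<Suc n. a i x * logfn x ^ i) \<beta> r' (real n)"
        unfolding eqS' .
      then show ?thesis by (intro disjI2 exI[of _ \<beta>] exI[of _ r'] exI[of _ n]) simp
    qed
  next
    assume "\<exists>\<alpha> r s. s < n \<and> LTm ?S \<alpha> r (real s)"
    then obtain \<alpha> r s where s: "s < n" and LS: "LTm ?S \<alpha> r (real s)" by blast
    from T show ?thesis
    proof
      assume "Zg ?T"
      from LTm_add_Zg[OF LS this] have "LTm (\<lambda>x. \<Sum>i<Suc n. a i x * logfn x ^ i) \<alpha> r (real s)"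
        unfolding eqS .
      then show ?thesis using s by (intro disjI2 exI[of _ \<alpha>] exI[of _ r] exI[of _ s]) simp
    next
      assume "\<exists>\<beta> r'. LTm ?T \<beta> r' (real n)"
      then obtain \<beta> r' where LT: "LTm ?T \<beta> r' (real n)" by blast
      show ?thesis
      proof (cases "r \<le> r'")
        case True
        then have "r < r' \<or> (r = r' \<and> real s < real n)" using s by auto
        from LTm_add[OF LT LTm_small[OF LS this]]
        have "LTm (\<lambda>x. \<Sum>i<Suc n. a i x * logfn x ^ i) \<beta> r' (real n)" unfolding eqS' .
        then show ?thesis by (intro disjI2 exI[of _ \<beta>] exI[of _ r'] exI[of _ n]) simp
      next
        case False
        then have "r' < r \<or> (r' = r \<and> real n < real s)" by auto
        from LTm_add[OF LS LTm_small[OF LT this]]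
        have "LTm (\<lambda>x. \<Sum>i<Suc n. a i x * logfn x ^ i) \<alpha> r (real s)" unfolding eqS .
        then show ?thesis using s by (intro disjI2 exI[of _ \<alpha>] exI[of _ r] exI[of _ s]) simp
      qed
    qed
  qed
qed

lemma polysum_Good: assumes "\<forall>i. a i \<in> KK" shows "Good (\<lambda>x. \<Sum>i<n. a i x * logfn x ^ i)"
  using polysum_good[OF assms, of n] unfolding Good_def by blast

lemma Good_div: assumes "Good f" "Good g" shows "Good (\<lambda>x. f x / g x)"
proof -
  consider "Zg f" | "Zg g" | a r s b r' s' where "LTm f a r s" "LTm g b r' s'"
    using assms unfolding Good_def by blast
  then show ?thesis
  proof cases
    case 1 have "Zg (\<lambda>x. f x / g x)" by (rule Zg_div[OF 1])
    then show ?thesis unfolding Good_def by (rule disjI1)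
  next
    case 2 have "Zg (\<lambda>x. f x / g x)" by (rule Zg_div2[OF 2])
    then show ?thesis unfolding Good_def by (rule disjI1)
  next
    case 3 from LTm_div[OF 3] show ?thesis unfolding Good_def by (intro disjI2 exI)
  qed
qed

lemma Good_cong: assumes "Good f" "germ_eq f g" shows "Good g"
proof -
  from assms(1) consider "Zg f" | a r s where "LTm f a r s" unfolding Good_def by blast
  then show ?thesis
  proof cases
    case 1 from Zg_cong[OF 1 assms(2)] show ?thesis unfolding Good_def by (rule disjI1)
  next
    case 2 from LTm_cong[OF assms(2) 2] show ?thesis unfolding Good_def by (intro disjI2 exI)
  qed
qed

lemma KK'_Good: assumes "h \<in> KK'" shows "Good h"
proof -
  from assms obtain a b n where ab: "\<forall>i. a i \<in> KK \<and> b i \<in> KK" and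
    g: "germ_eq h (\<lambda>x. (\<Sum>i<n. a i x * logfn x ^ i) / (\<Sum>i<n. b i x * logfn x ^ i))"
    unfolding KK'_def adjoin_def by blast
  have "Good (\<lambda>x. (\<Sum>i<n. a i x * logfn x ^ i) / (\<Sum>i<n. b i x * logfn x ^ i))"
    using ab by (intro Good_div polysum_Good) auto
  then show ?thesis by (rule Good_cong[OF _ germ_eq_sym[OF g]])
qed

lemma Good_ev_nz: assumes "Good h" shows "Zg h \<or> eventually (\<lambda>x. h x \<noteq> 0) at_top"
proof -
  from assms consider "Zg h" | a r s where "LTm h a r s" unfolding Good_def by blast
  then show ?thesis
  proof cases
    case 1 then show ?thesis by (rule disjI1)
  next
    case 2 from LTm_ev_nz[OF 2] show ?thesis by (rule disjI2)
  qed
qed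


lemma phi_fixed_const: assumes "p \<ge> 2" "Good e" "germ_eq (phi p e) e" shows "\<exists>\<gamma>. germ_eq e (\<lambda>_. \<gamma>)"
proof -
  from assms(2) consider "Zg e" | a R S where "LTm e a R S" unfolding Good_def by blast
  then show ?thesis
  proof cases
    case 1 then show ?thesis unfolding Zg_def by (rule exI)
  next
    case 2
    have p0: "p > 0" using assms(1) by simp
    have L2: "LTm e (a * complex_of_real (real p powr S)) (real p * R) S"
      by (rule LTm_cong[OF assms(3) LTm_phi[OF 2 p0]])
    from LTm_unique[OF 2 L2] have u1: "R = real p * R" and u2: "a = a * complex_of_real (real p powr S)"
      by simp_all
    have a0: "a \<noteq> 0" using 2 unfolding LTm_def by blast
    have "(real p - 1) * R = 0" using u1 by (simp add: algebra_simps)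
    moreover have "real p - 1 \<noteq> 0" using assms(1) by simp
    ultimately have R0: "R = 0" by simp
    have "complex_of_real (real p powr S) = 1" using u2 a0 by simp
    then have "real p powr S = 1" by (simp only: of_real_eq_1_iff)
    moreover have "real p > 1" using assms(1) by simp
    ultimately have S0: "S = 0" by simp
    have l0: "((\<lambda>x. e x / complex_of_real (wfn 0 0 x)) \<longlongrightarrow> a) at_top"
      using 2 R0 S0 unfolding LTm_def by blast
    have ev0: "eventually (\<lambda>x. e x / complex_of_real (wfn 0 0 x) = e x) at_top"
      using eventually_gt_at_top[of 1] by eventually_elim (simp add: wfn_def)
    have lim: "(e \<longlongrightarrow> a) at_top" using tendsto_ev_eq[OF l0 ev0] by simp
    from assms(3) obtain x0 where x0: "\<And>x. x \<ge> x0 \<Longrightarrow> e (x^p) = e x"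
      unfolding germ_eq_def phi_def eventually_at_top_linorder by blast
    define x1 where "x1 = max x0 2"
    have "\<forall>x\<ge>x1. e x = a"
    proof (intro allI impI)
      fix x assume hx: "x1 \<le> x"
      hence x2: "x \<ge> 2" "x \<ge> x0" by (auto simp: x1_def)
      define u where "u k = x ^ (p ^ k)" for k
      have ux: "u k \<ge> x" for k
      proof -
        have "x ^ 1 \<le> x ^ (p ^ k)" by (rule power_increasing) (use p0 x2 in auto)
        then show ?thesis by (simp add: u_def)
      qed
      have eu: "e (u k) = e x" for k
      proof (induction k)
        case 0 then show ?case by (simp add: u_def)
      next
        case (Suc k)
        have "u (Suc k) = (u k) ^ p" by (simp add: u_def power_mult[symmetric] mult.commute)
        then have "e (u (Suc k)) = e (u k)" using x0[of "u k"] ux[of k] x2 by simp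
        then show ?case using Suc by simp
      qed
      have lk: "real k \<le> u k" for k
      proof -
        have "1 + real k * (x - 1) \<le> (1 + (x - 1)) ^ k" by (rule Bernoulli_inequality) (use x2 in simp)
        then have "real k \<le> x ^ k" using x2
          by (smt (verit, ccfv_SIG) mult_le_cancel_left1 of_nat_0_le_iff)
        also have "x ^ k \<le> x ^ (p ^ k)" by (rule power_increasing) (use assms(1) x2 in auto)
        finally show ?thesis by (simp add: u_def)
      qed
      have "filterlim u at_top sequentially"
        by (rule filterlim_at_top_mono[OF filterlim_real_sequentially]) (use lk in simp)
      then have "((\<lambda>k. e (u k)) \<longlongrightarrow> a) sequentially" by (rule filterlim_compose[OF lim])
      then have "((\<lambda>k. e x) \<longlongrightarrow> a) sequentially" by (simp add: eu)
      then show "e x = a" by (rule tendsto_unique[OF trivial_limit_sequentially tendsto_const])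
    qed
    then have "germ_eq e (\<lambda>_. a)" unfolding germ_eq_def eventually_at_top_linorder by blast
    then show ?thesis by (rule exI)
  qed
qed

lemma gs_cong: "germ_subfield L \<Longrightarrow> f \<in> L \<Longrightarrow> germ_eq f g \<Longrightarrow> g \<in> L"
  unfolding germ_subfield_def by blast
lemma gs_zero: "germ_subfield L \<Longrightarrow> (\<lambda>_. 0) \<in> L"
  unfolding germ_subfield_def by blast
lemma gs_one: "germ_subfield L \<Longrightarrow> (\<lambda>_. 1) \<in> L"
  unfolding germ_subfield_def by blast
lemma gs_add: "germ_subfield L \<Longrightarrow> f \<in> L \<Longrightarrow> g \<in> L \<Longrightarrow> (\<lambda>x. f x + g x) \<in> L"
  unfolding germ_subfield_def by blast
lemma gs_mult: "germ_subfield L \<Longrightarrow> f \<in> L \<Longrightarrow> g \<in> L \<Longrightarrow> (\<lambda>x. f x * g x) \<in> L"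
  unfolding germ_subfield_def by blast
lemma gs_neg: "germ_subfield L \<Longrightarrow> f \<in> L \<Longrightarrow> (\<lambda>x. - f x) \<in> L"
  unfolding germ_subfield_def by blast
lemma gs_inv: "germ_subfield L \<Longrightarrow> f \<in> L \<Longrightarrow> (\<lambda>x. inverse (f x)) \<in> L"
  unfolding germ_subfield_def by blast
lemma gs_diff: assumes "germ_subfield L" "f \<in> L" "g \<in> L" shows "(\<lambda>x. f x - g x) \<in> L"
proof -
  have "(\<lambda>x. f x + (\<lambda>x. - g x) x) \<in> L" by (rule gs_add[OF assms(1,2) gs_neg[OF assms(1,3)]])
  then show ?thesis by simp
qed
lemma gs_div: assumes "germ_subfield L" "f \<in> L" "g \<in> L" shows "(\<lambda>x. f x / g x) \<in> L"
proof -
  have "(\<lambda>x. f x * (\<lambda>x. inverse (g x)) x) \<in> L" by (rule gs_mult[OF assms(1,2) gs_inv[OF assms(1,3)]])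
  then show ?thesis by (simp add: divide_inverse)
qed
lemma gs_pow: assumes "germ_subfield L" "f \<in> L" shows "(\<lambda>x. f x ^ n) \<in> L"
proof (induction n)
  case 0 then show ?case using gs_one[OF assms(1)] by simp
next
  case (Suc n)
  have "(\<lambda>x. f x * (\<lambda>x. f x ^ n) x) \<in> L" by (rule gs_mult[OF assms(1,2) Suc])
  then show ?case by simp
qed
lemma gs_sum: assumes "germ_subfield L" shows "(\<forall>i<(n::nat). c i \<in> L) \<Longrightarrow> (\<lambda>x. \<Sum>i<n. c i x) \<in> L"
proof (induction n)
  case 0 then show ?case using gs_zero[OF assms(1)] by simp
next
  case (Suc n)
  have "(\<lambda>x. (\<lambda>x. \<Sum>i<n. c i x) x + c n x) \<in> L"
    by (rule gs_add[OF assms(1)]) (use Suc in auto)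
  then show ?case by simp
qed

lemma const_KK: "(\<lambda>_. c) \<in> KK"
proof -
  have "(\<lambda>_. c) \<in> Kj 1"
    unfolding Kj_def germ_eq_def
    by (rule CollectI, rule exI[of _ "[:c:]"], rule exI[of _ 1]) simp
  then show ?thesis unfolding KK_def by auto
qed

lemma adjoin_sub: assumes "germ_subfield L" "KK \<subseteq> L" "T \<in> L" shows "adjoin KK T \<subseteq> L"
proof
  fix f assume "f \<in> adjoin KK T"
  then obtain a b n where ab: "\<forall>i. a i \<in> KK \<and> b i \<in> KK" and
    g: "germ_eq f (\<lambda>x. (\<Sum>i<n. a i x * T x ^ i) / (\<Sum>i<n. b i x * T x ^ i))"
    unfolding adjoin_def by blast
  have A1: "(\<lambda>x. a i x * T x ^ i) \<in> L" for i
  proof -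
    have "a i \<in> L" using ab assms(2) by blast
    from gs_mult[OF assms(1) this gs_pow[OF assms(1,3)]] show ?thesis .
  qed
  have B1: "(\<lambda>x. b i x * T x ^ i) \<in> L" for i
  proof -
    have "b i \<in> L" using ab assms(2) by blast
    from gs_mult[OF assms(1) this gs_pow[OF assms(1,3)]] show ?thesis .
  qed
  have A: "(\<lambda>x. \<Sum>i<n. a i x * T x ^ i) \<in> L"
    by (rule gs_sum[OF assms(1)]) (use A1 in blast)
  have B: "(\<lambda>x. \<Sum>i<n. b i x * T x ^ i) \<in> L"
    by (rule gs_sum[OF assms(1)]) (use B1 in blast)
  have "(\<lambda>x. (\<Sum>i<n. a i x * T x ^ i) / (\<Sum>i<n. b i x * T x ^ i)) \<in> L"
    by (rule gs_div[OF assms(1) A B])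
  then show "f \<in> L" by (rule gs_cong[OF assms(1) _ germ_eq_sym[OF g]])
qed

lemma sum_split_add: "(\<Sum>i<a+b. g i) = (\<Sum>i<a. g i) + (\<Sum>r<b. g (a + r))" for g :: "nat \<Rightarrow> 'a::comm_monoid_add"
  by (induction b) (simp_all add: add.assoc)

lemma sum_reindex_mod: "(\<Sum>r<m. \<Sum>j<N. g (j*m + r)) = (\<Sum>i<N*m. g i)" for g :: "nat \<Rightarrow> 'a::comm_monoid_add"
proof (induction N)
  case 0 then show ?case by simp
next
  case (Suc N)
  have "(\<Sum>r<m. \<Sum>j<Suc N. g (j*m + r)) = (\<Sum>r<m. \<Sum>j<N. g (j*m + r)) + (\<Sum>r<m. g (N*m + r))"
    by (simp add: sum.distrib)
  also have "\<dots> = (\<Sum>i<N*m. g i) + (\<Sum>r<m. g (N*m + r))" using Suc by simp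
  also have "\<dots> = (\<Sum>i<N*m + m. g i)" by (simp add: sum_split_add)
  finally show ?case by (simp add: add.commute)
qed


definition Ann :: "(real \<Rightarrow> complex) set \<Rightarrow> nat \<Rightarrow> (nat \<Rightarrow> real \<Rightarrow> complex) \<Rightarrow> bool" where
  "Ann L n c \<longleftrightarrow> (\<forall>i\<le>n. c i \<in> L) \<and> \<not> Zg (c n) \<and>
     germ_eq (\<lambda>x. \<Sum>i\<le>n. c i x * logfn x ^ i) (\<lambda>_. 0)"

lemma sum_atMost_split: "(\<Sum>i\<le>n. g i) = (\<Sum>i<n. g i) + g n" for g :: "nat \<Rightarrow> 'a::comm_monoid_add"
  by (simp add: lessThan_Suc_atMost[symmetric])

lemma ann_exists:
  "(\<forall>i<N. d i \<in> L) \<Longrightarrow> germ_eq (\<lambda>x. \<Sum>i<N. d i x * logfn x ^ i) (\<lambda>_. 0) \<Longrightarrow> j < N \<Longrightarrow>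
   \<not> Zg (d j) \<Longrightarrow> \<exists>n<N. \<exists>c. Ann L n c"
proof (induction N arbitrary: j)
  case 0 then show ?case by simp
next
  case (Suc N)
  show ?case
  proof (cases "Zg (d N)")
    case True
    have g: "germ_eq (\<lambda>x. \<Sum>i<N. d i x * logfn x ^ i) (\<lambda>_. 0)"
      using Suc.prems(2) True unfolding germ_eq_def Zg_def by eventually_elim simp
    have jN: "j < N" using Suc.prems(3,4) True by (cases "j = N") auto
    have dL: "\<forall>i<N. d i \<in> L" using Suc.prems(1) by simp
    from Suc.IH[OF dL g jN Suc.prems(4)] obtain n where "n < N" "\<exists>c. Ann L n c" by blast
    then show ?thesis by (intro exI[of _ n]) simp
  next
    case False
    have "Ann L N d" unfolding Ann_def
      using Suc.prems(1,2) False by (simp add: lessThan_Suc_atMost[symmetric])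
    then show ?thesis by blast
  qed
qed

lemma Zg_sum: assumes "\<forall>i<(N::nat). Zg (g i)" shows "Zg (\<lambda>x. \<Sum>i<N. g i x)"
proof -
  have "eventually (\<lambda>x. \<forall>i\<in>{..<N}. g i x = 0) at_top"
    using assms unfolding Zg_def germ_eq_def by (intro eventually_ball_finite) auto
  then show ?thesis unfolding Zg_def germ_eq_def by eventually_elim simp
qed

lemma zero_in_adjoin: assumes "Zg f" shows "f \<in> adjoin KK T"
  unfolding adjoin_def mem_Collect_eq
  by (rule exI[of _ "\<lambda>_ _. 0"], rule exI[of _ "\<lambda>_ _. 0"], rule exI[of _ 0])
     (use assms const_KK in \<open>simp add: Zg_def\<close>)

lemma adjoinI: "\<forall>i. a i \<in> S \<and> b i \<in> S \<Longrightarrow>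
  germ_eq f (\<lambda>x. (\<Sum>i<n. a i x * T x ^ i) / (\<Sum>i<n. b i x * T x ^ i)) \<Longrightarrow> f \<in> adjoin S T"
  unfolding adjoin_def by blast

lemma logfn_pow: "x > 0 \<Longrightarrow> logfn (x ^ p) = of_nat p * logfn x"
  by (simp add: logfn_def ln_realpow)

lemma Zg_const1: "\<not> Zg (\<lambda>_. 1)"
  unfolding Zg_def germ_eq_def by simp

context
  fixes p :: nat and L :: "(real \<Rightarrow> complex) set"
  assumes p2: "p \<ge> 2" and gs: "germ_subfield L" and KL: "KK \<subseteq> L" and LK: "L \<subseteq> KK'"
    and phiL: "\<forall>f\<in>L. phi p f \<in> L"
begin

lemma L_Good: "f \<in> L \<Longrightarrow> Good f" using LK KK'_Good by blast

lemma L_nz: assumes "f \<in> L" "\<not> Zg f" shows "eventually (\<lambda>x. f x \<noteq> 0) at_top"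
  using Good_ev_nz[OF L_Good[OF assms(1)]] assms(2) by blast

lemma L_repr: assumes "f \<in> L"
  obtains a b N where "\<forall>i. a i \<in> KK \<and> b i \<in> KK"
    "germ_eq f (\<lambda>x. (\<Sum>i<N. a i x * logfn x ^ i) / (\<Sum>i<N. b i x * logfn x ^ i))"
  using assms LK unfolding KK'_def adjoin_def by blast

lemma mult_form: assumes "germ_eq f (\<lambda>x. A x / B x)" "eventually (\<lambda>x. B x \<noteq> 0) at_top"
  shows "germ_eq (\<lambda>x. f x * B x) A"
  using assms unfolding germ_eq_def by eventually_elim simp

lemma caseA_sub: assumes noann: "\<not> (\<exists>n c. Ann L n c)" shows "L \<subseteq> adjoin KK (\<lambda>x. logfn x ^ 0)"
proof
  fix f assume fL: "f \<in> L"
  from L_repr[OF fL] obtain a b N where ab: "\<forall>i. a i \<in> KK \<and> b i \<in> KK" and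
    g: "germ_eq f (\<lambda>x. (\<Sum>i<N. a i x * logfn x ^ i) / (\<Sum>i<N. b i x * logfn x ^ i))" by blast
  let ?B = "\<lambda>x. \<Sum>i<N. b i x * logfn x ^ i"
  let ?A = "\<lambda>x. \<Sum>i<N. a i x * logfn x ^ i"
  have GB: "Good ?B" using ab by (intro polysum_Good) auto
  show "f \<in> adjoin KK (\<lambda>x. logfn x ^ 0)"
  proof (cases "Zg ?B")
    case True
    have "Zg f" using g True unfolding Zg_def germ_eq_def by eventually_elim simp
    then show ?thesis by (rule zero_in_adjoin)
  next
    case False
    then have evB: "eventually (\<lambda>x. ?B x \<noteq> 0) at_top" using Good_ev_nz[OF GB] by blast
    have fB: "germ_eq (\<lambda>x. f x * ?B x) ?A" by (rule mult_form[OF g evB])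
    define d where "d i = (\<lambda>x. f x * b i x - a i x)" for i
    have dL: "\<forall>i<N. d i \<in> L"
    proof (intro allI impI)
      fix i have "a i \<in> L" "b i \<in> L" using ab KL by auto
      then show "d i \<in> L" unfolding d_def using gs_diff[OF gs gs_mult[OF gs fL]] by blast
    qed
    have ds: "germ_eq (\<lambda>x. \<Sum>i<N. d i x * logfn x ^ i) (\<lambda>_. 0)"
      using fB unfolding germ_eq_def
    proof eventually_elim
      case (elim x)
      have "(\<Sum>i<N. d i x * logfn x ^ i) = f x * ?B x - ?A x"
        by (simp add: d_def sum_distrib_left sum_subtractf algebra_simps)
      then show ?case using elim by simp
    qed
    have dZ: "\<forall>j<N. Zg (d j)"
    proof (intro allI impI, rule ccontr)
      fix j assume "j < N" "\<not> Zg (d j)"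
      from ann_exists[OF dL ds this] noann show False by blast
    qed
    have "\<exists>j<N. \<not> Zg (b j)"
    proof (rule ccontr)
      assume "\<not> (\<exists>j<N. \<not> Zg (b j))"
      then have "\<forall>j<N. Zg (\<lambda>x. b j x * logfn x ^ j)"
      proof (intro allI impI)
        fix j assume "\<not> (\<exists>j<N. \<not> Zg (b j))" "j < N"
        then have "Zg (b j)" by blast
        then show "Zg (\<lambda>x. b j x * logfn x ^ j)" by (rule Zg_mult)
      qed
      then have "Zg ?B" by (rule Zg_sum)
      with False show False by blast
    qed
    then obtain j where j: "j < N" "\<not> Zg (b j)" by blast
    have "b j \<in> L" using ab KL by auto
    from L_nz[OF this j(2)] have evb: "eventually (\<lambda>x. b j x \<noteq> 0) at_top" .
    have fe: "germ_eq f (\<lambda>x. a j x / b j x)"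
      using dZ[rule_format, OF j(1)] evb unfolding Zg_def germ_eq_def d_def
      by eventually_elim (simp add: field_simps)
    show ?thesis
      by (rule adjoinI[where a="\<lambda>_. a j" and b="\<lambda>_. b j" and n=1]) (use ab fe in simp_all)
  qed
qed


lemma caseB_sub:
  assumes n0: "n0 \<ge> 1" and TL: "(\<lambda>x. logfn x ^ n0) \<in> L"
    and minimal: "\<And>d i. \<forall>i<n0. d i \<in> L \<Longrightarrow> germ_eq (\<lambda>x. \<Sum>i<n0. d i x * logfn x ^ i) (\<lambda>_. 0) \<Longrightarrow>
        i < n0 \<Longrightarrow> Zg (d i)"
  shows "L \<subseteq> adjoin KK (\<lambda>x. logfn x ^ n0)"
proof
  fix f assume fL: "f \<in> L"
  from L_repr[OF fL] obtain a b N where ab: "\<forall>i. a i \<in> KK \<and> b i \<in> KK" and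
    g: "germ_eq f (\<lambda>x. (\<Sum>i<N. a i x * logfn x ^ i) / (\<Sum>i<N. b i x * logfn x ^ i))" by blast
  let ?B = "\<lambda>x. \<Sum>i<N. b i x * logfn x ^ i"
  let ?A = "\<lambda>x. \<Sum>i<N. a i x * logfn x ^ i"
  have GB: "Good ?B" using ab by (intro polysum_Good) auto
  show "f \<in> adjoin KK (\<lambda>x. logfn x ^ n0)"
  proof (cases "Zg ?B")
    case True
    have "Zg f" using g True unfolding Zg_def germ_eq_def by eventually_elim simp
    then show ?thesis by (rule zero_in_adjoin)
  next
    case False
    then have evB: "eventually (\<lambda>x. ?B x \<noteq> 0) at_top" using Good_ev_nz[OF GB] by blast
    have fB: "germ_eq (\<lambda>x. f x * ?B x) ?A" by (rule mult_form[OF g evB])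
    define a' where "a' i = (if i < N then a i else (\<lambda>_. 0))" for i
    define b' where "b' i = (if i < N then b i else (\<lambda>_. 0))" for i
    have a'K: "\<forall>i. a' i \<in> KK \<and> b' i \<in> KK" using ab const_KK by (simp add: a'_def b'_def)
    define Br where "Br r = (\<lambda>x. \<Sum>j<N. b' (j*n0+r) x * (logfn x ^ n0) ^ j)" for r
    define Ar where "Ar r = (\<lambda>x. \<Sum>j<N. a' (j*n0+r) x * (logfn x ^ n0) ^ j)" for r
    have ident: "(\<Sum>r<n0. (\<Sum>j<N. c (j*n0+r) x * (logfn x ^ n0) ^ j) * logfn x ^ r) = (\<Sum>i<N. c i x * logfn x ^ i)"
      if hc: "\<And>i. i \<ge> N \<Longrightarrow> c i x = 0" for c x
    proof -
      let ?g = "\<lambda>i. c i x * logfn x ^ i"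
      have tm: "c (j*n0+r) x * (logfn x ^ n0) ^ j * logfn x ^ r = ?g (j*n0+r)" for j r
      proof -
        have "(logfn x ^ n0) ^ j * logfn x ^ r = logfn x ^ (j*n0+r)"
          by (simp add: power_add power_mult[symmetric] mult.commute)
        then show ?thesis by (simp add: mult.assoc)
      qed
      have "(\<Sum>r<n0. (\<Sum>j<N. c (j*n0+r) x * (logfn x ^ n0) ^ j) * logfn x ^ r) = (\<Sum>r<n0. \<Sum>j<N. ?g (j*n0+r))"
        unfolding sum_distrib_right tm ..
      also have "\<dots> = (\<Sum>i<N*n0. ?g i)" by (rule sum_reindex_mod)
      also have "\<dots> = (\<Sum>i<N + (N*n0 - N). ?g i)"
      proof -
        have "N \<le> N * n0" using n0 by simp
        then have "N*n0 = N + (N*n0 - N)" by simp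
        then show ?thesis by simp
      qed
      also have "\<dots> = (\<Sum>i<N. ?g i) + (\<Sum>r<N*n0 - N. ?g (N + r))" by (rule sum_split_add)
      also have "(\<Sum>r<N*n0 - N. ?g (N + r)) = 0" using hc by simp
      finally show ?thesis by simp
    qed
    have Bsum: "(\<Sum>r<n0. Br r x * logfn x ^ r) = ?B x" for x
    proof -
      have "(\<Sum>r<n0. Br r x * logfn x ^ r) = (\<Sum>i<N. b' i x * logfn x ^ i)"
        unfolding Br_def by (rule ident) (simp add: b'_def)
      also have "\<dots> = ?B x" by (rule sum.cong) (simp_all add: b'_def)
      finally show ?thesis .
    qed
    have Asum: "(\<Sum>r<n0. Ar r x * logfn x ^ r) = ?A x" for x
    proof -
      have "(\<Sum>r<n0. Ar r x * logfn x ^ r) = (\<Sum>i<N. a' i x * logfn x ^ i)"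
        unfolding Ar_def by (rule ident) (simp add: a'_def)
      also have "\<dots> = ?A x" by (rule sum.cong) (simp_all add: a'_def)
      finally show ?thesis .
    qed
    have BrL: "Br r \<in> L" for r
    proof -
      have "(\<lambda>x. b' (j*n0+r) x * (logfn x ^ n0) ^ j) \<in> L" for j
      proof -
        have "b' (j*n0+r) \<in> L" using a'K KL by blast
        from gs_mult[OF gs this gs_pow[OF gs TL]] show ?thesis .
      qed
      then show ?thesis unfolding Br_def by (intro gs_sum[OF gs]) blast
    qed
    have ArL: "Ar r \<in> L" for r
    proof -
      have "(\<lambda>x. a' (j*n0+r) x * (logfn x ^ n0) ^ j) \<in> L" for j
      proof -
        have "a' (j*n0+r) \<in> L" using a'K KL by blast
        from gs_mult[OF gs this gs_pow[OF gs TL]] show ?thesis .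
      qed
      then show ?thesis unfolding Ar_def by (intro gs_sum[OF gs]) blast
    qed
    define d where "d r = (\<lambda>x. f x * Br r x - Ar r x)" for r
    have dL: "\<forall>r<n0. d r \<in> L"
      unfolding d_def using gs_diff[OF gs gs_mult[OF gs fL BrL] ArL] by blast
    have ds: "germ_eq (\<lambda>x. \<Sum>r<n0. d r x * logfn x ^ r) (\<lambda>_. 0)"
      using fB unfolding germ_eq_def
    proof eventually_elim
      case (elim x)
      have "(\<Sum>r<n0. d r x * logfn x ^ r) = f x * (\<Sum>r<n0. Br r x * logfn x ^ r) - (\<Sum>r<n0. Ar r x * logfn x ^ r)"
        by (simp add: d_def sum_distrib_left sum_subtractf algebra_simps)
      also have "\<dots> = f x * ?B x - ?A x" by (simp only: Bsum Asum)
      finally show ?case using elim by simp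
    qed
    have dZ: "\<forall>r<n0. Zg (d r)" using minimal[OF dL ds] by blast
    have "\<exists>r<n0. \<not> Zg (Br r)"
    proof (rule ccontr)
      assume hn: "\<not> (\<exists>r<n0. \<not> Zg (Br r))"
      have "\<forall>r<n0. Zg (\<lambda>x. Br r x * logfn x ^ r)"
      proof (intro allI impI)
        fix r assume "r < n0"
        then have "Zg (Br r)" using hn by blast
        then show "Zg (\<lambda>x. Br r x * logfn x ^ r)" by (rule Zg_mult)
      qed
      then have "Zg (\<lambda>x. \<Sum>r<n0. Br r x * logfn x ^ r)" by (rule Zg_sum)
      then have "Zg ?B" unfolding Bsum .
      with False show False by blast
    qed
    then obtain r where r: "r < n0" "\<not> Zg (Br r)" by blast
    from L_nz[OF BrL r(2)] have evb: "eventually (\<lambda>x. Br r x \<noteq> 0) at_top" .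
    have fe: "germ_eq f (\<lambda>x. Ar r x / Br r x)"
      using dZ[rule_format, OF r(1)] evb unfolding Zg_def germ_eq_def d_def
      by eventually_elim (simp add: field_simps)
    show ?thesis
      by (rule adjoinI[where a="\<lambda>j. a' (j*n0+r)" and b="\<lambda>j. b' (j*n0+r)" and n=N])
         (use a'K fe in \<open>simp_all add: Ar_def Br_def\<close>)
  qed
qed


lemma caseB_main: assumes ex: "\<exists>n c. Ann L n c" shows "\<exists>k::nat. L = adjoin KK (\<lambda>x. logfn x ^ k)"
proof -
  define n0 where "n0 = (LEAST n. \<exists>c. Ann L n c)"
  have "\<exists>c. Ann L n0 c" unfolding n0_def by (rule LeastI_ex[OF ex])
  then obtain c0 where c0: "Ann L n0 c0" by blast
  have minimal: "Zg (d i)" if h1: "\<forall>i<n0. d i \<in> L" and h2: "germ_eq (\<lambda>x. \<Sum>i<n0. d i x * logfn x ^ i) (\<lambda>_. 0)"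
    and h3: "i < n0" for d i
  proof (rule ccontr)
    assume h4: "\<not> Zg (d i)"
    from ann_exists[OF h1 h2 h3 h4] obtain n c where "n < n0" "Ann L n c" by blast
    with not_less_Least[of n "\<lambda>n. \<exists>c. Ann L n c"] show False unfolding n0_def by blast
  qed
  have least: "n0 \<le> m" if "Ann L m c" for m c
    unfolding n0_def by (rule Least_le) (use that in blast)
  have c0L: "\<forall>i\<le>n0. c0 i \<in> L" and c0n: "\<not> Zg (c0 n0)"
    and c0s: "germ_eq (\<lambda>x. \<Sum>i\<le>n0. c0 i x * logfn x ^ i) (\<lambda>_. 0)"
    using c0 unfolding Ann_def by auto
  have n0pos: "n0 \<ge> 1"
  proof (rule ccontr)
    assume "\<not> n0 \<ge> 1"
    then have n00: "n0 = 0" by simp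
    have "Zg (c0 n0)" using c0s unfolding Zg_def germ_eq_def n00 by eventually_elim simp
    with c0n show False by blast
  qed
  have ev_c: "eventually (\<lambda>x. c0 n0 x \<noteq> 0) at_top" using L_nz c0L c0n by blast
  define \<mu> where "\<mu> i = (\<lambda>x. c0 i x / c0 n0 x)" for i
  have \<mu>L: "\<mu> i \<in> L" if "i \<le> n0" for i
    unfolding \<mu>_def using gs_div[OF gs] c0L that by blast
  have \<mu>n: "germ_eq (\<mu> n0) (\<lambda>_. 1)"
    using ev_c unfolding germ_eq_def \<mu>_def by eventually_elim simp
  have \<mu>s: "germ_eq (\<lambda>x. \<Sum>i\<le>n0. \<mu> i x * logfn x ^ i) (\<lambda>_. 0)"
    using c0s unfolding germ_eq_def
  proof eventually_elim
    case (elim x)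
    have "(\<Sum>i\<le>n0. \<mu> i x * logfn x ^ i) = (\<Sum>i\<le>n0. c0 i x * logfn x ^ i) / c0 n0 x"
      unfolding \<mu>_def by (simp add: sum_divide_distrib)
    then show ?case using elim by simp
  qed
  have p0: "p > 0" using p2 by simp
  have limp: "filterlim (\<lambda>x::real. x ^ p) at_top at_top"
    using p0 by (intro filterlim_pow_at_top filterlim_ident)
  define \<nu> where "\<nu> i = (\<lambda>x. \<mu> i (x^p) / of_nat p ^ (n0 - i))" for i
  have \<nu>L: "\<nu> i \<in> L" if "i \<le> n0" for i
  proof -
    have "phi p (\<mu> i) \<in> L" using phiL \<mu>L[OF that] by blast
    moreover have "(\<lambda>_. (of_nat p ^ (n0 - i) :: complex)) \<in> L" using KL const_KK by blast
    ultimately have "(\<lambda>x. phi p (\<mu> i) x / (\<lambda>_. (of_nat p ^ (n0 - i) :: complex)) x) \<in> L"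
      by (rule gs_div[OF gs])
    then show ?thesis unfolding \<nu>_def phi_def by simp
  qed
  have \<mu>sp: "eventually (\<lambda>x. (\<Sum>i\<le>n0. \<mu> i (x^p) * logfn (x^p) ^ i) = 0) at_top"
    using eventually_compose_filterlim[OF \<mu>s[unfolded germ_eq_def] limp] by simp
  have \<nu>s: "germ_eq (\<lambda>x. \<Sum>i\<le>n0. \<nu> i x * logfn x ^ i) (\<lambda>_. 0)"
    using \<mu>sp eventually_gt_at_top[of 0] unfolding germ_eq_def
  proof eventually_elim
    case (elim x)
    have pp: "(of_nat p :: complex) \<noteq> 0" using p0 by simp
    have "\<nu> i x * logfn x ^ i = \<mu> i (x^p) * logfn (x^p) ^ i / of_nat p ^ n0" if "i \<le> n0" for i
    proof -
      have e: "(of_nat p :: complex) ^ n0 = of_nat p ^ i * of_nat p ^ (n0 - i)"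
        using that by (simp add: power_add[symmetric])
      show ?thesis unfolding \<nu>_def logfn_pow[OF elim(2)] e using pp
        by (simp add: power_mult_distrib field_simps)
    qed
    then have "(\<Sum>i\<le>n0. \<nu> i x * logfn x ^ i) = (\<Sum>i\<le>n0. \<mu> i (x^p) * logfn (x^p) ^ i) / of_nat p ^ n0"
      by (simp add: sum_divide_distrib)
    then show ?case using elim(1) by simp
  qed
  have \<nu>n: "germ_eq (\<nu> n0) (\<lambda>_. 1)"
    using eventually_compose_filterlim[OF \<mu>n[unfolded germ_eq_def] limp]
    unfolding germ_eq_def \<nu>_def by simp
  define \<delta> where "\<delta> i = (\<lambda>x. \<mu> i x - \<nu> i x)" for i
  have \<delta>L: "\<forall>i<n0. \<delta> i \<in> L"
    unfolding \<delta>_def using gs_diff[OF gs \<mu>L \<nu>L] by auto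
  have \<delta>s: "germ_eq (\<lambda>x. \<Sum>i<n0. \<delta> i x * logfn x ^ i) (\<lambda>_. 0)"
    using \<mu>s \<nu>s \<mu>n \<nu>n unfolding germ_eq_def
  proof eventually_elim
    case (elim x)
    have "(\<Sum>i<n0. \<delta> i x * logfn x ^ i) =
        ((\<Sum>i\<le>n0. \<mu> i x * logfn x ^ i) - \<mu> n0 x * logfn x ^ n0) -
        ((\<Sum>i\<le>n0. \<nu> i x * logfn x ^ i) - \<nu> n0 x * logfn x ^ n0)"
      by (simp add: sum_atMost_split \<delta>_def sum_subtractf algebra_simps)
    then show ?case using elim by simp
  qed
  have \<mu>\<nu>: "germ_eq (\<nu> i) (\<mu> i)" if "i < n0" for i
    using minimal[OF \<delta>L \<delta>s that] unfolding Zg_def germ_eq_def \<delta>_def by eventually_elim simp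
  have \<gamma>ex: "\<exists>\<gamma>. germ_eq (\<mu> i) (\<lambda>x. \<gamma> * logfn x ^ (n0 - i))" if hi: "i < n0" for i
  proof -
    define m where "m = n0 - i"
    define e where "e = (\<lambda>x. \<mu> i x / logfn x ^ m)"
    have Ge: "Good e"
    proof -
      have "Good (\<lambda>x. logfn x ^ m)" unfolding Good_def using LTm_logpow by blast
      from Good_div[OF L_Good[OF \<mu>L] this] show ?thesis unfolding e_def using hi by simp
    qed
    have pe: "germ_eq (phi p e) e"
      using \<mu>\<nu>[OF hi] eventually_gt_at_top[of 1] unfolding germ_eq_def
    proof eventually_elim
      case (elim x)
      have "phi p e x = \<mu> i (x^p) / (of_nat p ^ m * logfn x ^ m)"
        unfolding phi_def e_def using elim(2) by (simp add: logfn_pow power_mult_distrib)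
      also have "\<dots> = \<nu> i x / logfn x ^ m"
        using p0 by (simp add: \<nu>_def m_def)
      also have "\<dots> = e x" using elim(1) by (simp add: e_def)
      finally show ?case .
    qed
    from phi_fixed_const[OF p2 Ge pe] obtain \<gamma> where g: "germ_eq e (\<lambda>_. \<gamma>)" by blast
    have "germ_eq (\<mu> i) (\<lambda>x. \<gamma> * logfn x ^ m)"
      using g eventually_gt_at_top[of 1] unfolding germ_eq_def
    proof eventually_elim
      case (elim x)
      have "logfn x \<noteq> 0" using elim(2) by (simp add: logfn_def)
      then show ?case using elim(1) by (simp add: e_def field_simps)
    qed
    then show ?thesis unfolding m_def by blast
  qed
  have "\<forall>i. \<exists>\<gamma>. i < n0 \<longrightarrow> germ_eq (\<mu> i) (\<lambda>x. \<gamma> * logfn x ^ (n0 - i))"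
    using \<gamma>ex by blast
  then obtain \<gamma> where \<gamma>: "\<And>i. i < n0 \<Longrightarrow> germ_eq (\<mu> i) (\<lambda>x. \<gamma> i * logfn x ^ (n0 - i))"
    using choice[of "\<lambda>i g. i < n0 \<longrightarrow> germ_eq (\<mu> i) (\<lambda>x. g * logfn x ^ (n0 - i))"] by blast
  have ev\<gamma>: "eventually (\<lambda>x. \<forall>i\<in>{..<n0}. \<mu> i x = \<gamma> i * logfn x ^ (n0 - i)) at_top"
    using \<gamma> unfolding germ_eq_def by (intro eventually_ball_finite) auto
  have evsum: "eventually (\<lambda>x. ((\<Sum>i<n0. \<gamma> i) + 1) * logfn x ^ n0 = 0 \<and> logfn x \<noteq> 0) at_top"
    using ev\<gamma> \<mu>s \<mu>n eventually_gt_at_top[of 1] unfolding germ_eq_def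
  proof eventually_elim
    case (elim x)
    have "(\<Sum>i\<le>n0. \<mu> i x * logfn x ^ i) = (\<Sum>i<n0. \<mu> i x * logfn x ^ i) + \<mu> n0 x * logfn x ^ n0"
      by (rule sum_atMost_split)
    also have "(\<Sum>i<n0. \<mu> i x * logfn x ^ i) = (\<Sum>i<n0. \<gamma> i * logfn x ^ n0)"
    proof (rule sum.cong[OF refl])
      fix i assume "i \<in> {..<n0}"
      then have "i < n0" "\<mu> i x = \<gamma> i * logfn x ^ (n0 - i)" using elim(1) by auto
      then show "\<mu> i x * logfn x ^ i = \<gamma> i * logfn x ^ n0"
        by (simp add: mult.assoc power_add[symmetric])
    qed
    finally have "((\<Sum>i<n0. \<gamma> i) + 1) * logfn x ^ n0 = 0"
      using elim(2,3) by (simp add: sum_distrib_right distrib_right)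
    moreover have "logfn x \<noteq> 0" using elim(4) by (simp add: logfn_def)
    ultimately show ?case by simp
  qed
  obtain x0 where "((\<Sum>i<n0. \<gamma> i) + 1) * logfn x0 ^ n0 = 0 \<and> logfn x0 \<noteq> 0"
    using eventually_happens'[OF trivial_limit_at_top_linorder evsum] by blast
  then have sum0: "(\<Sum>i<n0. \<gamma> i) + 1 = 0" by auto
  have "\<exists>i<n0. \<gamma> i \<noteq> 0"
  proof (rule ccontr)
    assume "\<not> (\<exists>i<n0. \<gamma> i \<noteq> 0)"
    then have "(\<Sum>i<n0. \<gamma> i) = 0" by simp
    with sum0 show False by simp
  qed
  then obtain i where i: "i < n0" "\<gamma> i \<noteq> 0" by blast
  define m where "m = n0 - i"
  have m1: "m \<ge> 1" "m \<le> n0" using i by (auto simp: m_def)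
  have TmL: "(\<lambda>x. logfn x ^ m) \<in> L"
  proof -
    have "(\<lambda>_. \<gamma> i) \<in> L" using KL const_KK by blast
    from gs_div[OF gs \<mu>L this] have "(\<lambda>x. \<mu> i x / \<gamma> i) \<in> L" using i by simp
    moreover have "germ_eq (\<lambda>x. \<mu> i x / \<gamma> i) (\<lambda>x. logfn x ^ m)"
      using \<gamma>[OF i(1)] unfolding germ_eq_def m_def by eventually_elim (use i(2) in simp)
    ultimately show ?thesis by (rule gs_cong[OF gs])
  qed
  define d where "d j = (if j = m then (\<lambda>_. 1) else if j = 0 then (\<lambda>x. - (logfn x ^ m)) else (\<lambda>_. 0))" for j
  have "Ann L m d"
    unfolding Ann_def
  proof (intro conjI allI impI)
    fix j assume "j \<le> m"
    show "d j \<in> L" unfolding d_def using gs_one[OF gs] gs_neg[OF gs TmL] gs_zero[OF gs] by simp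
  next
    show "\<not> Zg (d m)" unfolding d_def using Zg_const1 by simp
  next
    have "(\<Sum>j\<le>m. d j x * logfn x ^ j) = 0" for x
    proof -
      have "(\<Sum>j\<le>m. d j x * logfn x ^ j) = (\<Sum>j\<le>m. (if j = m then logfn x ^ m else 0) + (if j = 0 then - (logfn x ^ m) else 0))"
        by (rule sum.cong) (use m1 in \<open>auto simp: d_def\<close>)
      also have "\<dots> = 0" by (simp add: sum.distrib)
      finally show ?thesis .
    qed
    then show "germ_eq (\<lambda>x. \<Sum>j\<le>m. d j x * logfn x ^ j) (\<lambda>_. 0)" unfolding germ_eq_def by simp
  qed
  from least[OF this] m1 have "m = n0" by simp
  with TmL have TL: "(\<lambda>x. logfn x ^ n0) \<in> L" by simp
  have "L = adjoin KK (\<lambda>x. logfn x ^ n0)"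
  proof
    show "L \<subseteq> adjoin KK (\<lambda>x. logfn x ^ n0)" by (rule caseB_sub[OF n0pos TL]) (rule minimal; assumption)
    show "adjoin KK (\<lambda>x. logfn x ^ n0) \<subseteq> L" by (rule adjoin_sub[OF gs KL TL])
  qed
  then show ?thesis by blast
qed

lemma main_aux: "\<exists>k::nat. L = adjoin KK (\<lambda>x. logfn x ^ k)"
proof (cases "\<exists>n c. Ann L n c")
  case True then show ?thesis by (rule caseB_main)
next
  case False
  have T0: "(\<lambda>x. logfn x ^ 0) \<in> L" using gs_one[OF gs] by simp
  have "L = adjoin KK (\<lambda>x. logfn x ^ 0)"
    using caseA_sub[OF False] adjoin_sub[OF gs KL T0] by blast
  then show ?thesis by blast
qed

end

theorem lemma1p5:
  fixes p :: nat and L :: "(real \<Rightarrow> complex) set"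
  assumes "p \<ge> 2"
    and "germ_subfield L"
    and "KK \<subseteq> L" and "L \<subseteq> KK'"
    and "\<forall>f\<in>L. phi p f \<in> L"
    and "\<forall>g\<in>L. \<exists>f\<in>L. germ_eq (phi p f) g"
  shows "\<exists>k::nat. L = adjoin KK (\<lambda>x. logfn x ^ k)"
  by (rule main_aux[OF assms(1-5)])

end
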